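(* Let $f:\mathbb{N}\to[0,\infty)$ be any non-negative function with $\limsup_{n\to\infty} f(n)/n>0$. Then there exists a sequence of real numbers $a(1),a(2),\dots$ such that $a(n+m)\le a(n)+a(m)+f(n+m)$ for all integers $n,m\ge 1$, and $\lim_{n\to\infty} a(n)/n$ does not exist. *)

theory Defs
  imports "HOL-Analysis.Analysis"
begin

end

theory Submission
  imports Defs
begin

lemma freq_tendsto_val:
  fixes X :: "nat \<Rightarrow> ereal"
  assumes "(X \<longlongrightarrow> L) sequentially" "infinite {n. X n = v}"
  shows "L = v"
proof (rule ccontr)
  assume "L \<noteq> v"
  then obtain U where U: "open U" "L \<in> U" "v \<notin> U"
    by (metis t1_space)
  then have "eventually (\<lambda>n. X n \<in> U) sequentially"
    using assms(1) topological_tendstoD by blast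
  then obtain N where N: "\<And>n. n \<ge> N \<Longrightarrow> X n \<in> U"
    by (auto simp: eventually_sequentially)
  have "{n. X n = v} \<subseteq> {..<N}" proof
    fix n assume "n \<in> {n. X n = v}"
    then show "n \<in> {..<N}" using N[of n] U(3) by (cases "N \<le> n") auto
  qed
  then show False using assms(2) finite_subset by blast
qed

theorem mainTheorem7:
  fixes f :: "nat \<Rightarrow> real"
  assumes f_nonneg: "\<And>n. n \<ge> 1 \<Longrightarrow> f n \<ge> 0"
    and f_limsup: "limsup (\<lambda>n. ereal (f n / real n)) > 0"
  shows "\<exists>a :: nat \<Rightarrow> real.
           (\<forall>n m. n \<ge> 1 \<longrightarrow> m \<ge> 1 \<longrightarrow> a (n + m) \<le> a n + a m + f (n + m)) \<and>
           \<not> (\<exists>L :: ereal. ((\<lambda>n. ereal (a n / real n)) \<longlongrightarrow> L) sequentially)"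
proof -
  obtain c :: real where c: "0 < c" "ereal c < limsup (\<lambda>n. ereal (f n / real n))"
    using ereal_dense2[OF f_limsup] by (metis ereal_less(2))
  then obtain y where y: "y > ereal c" "\<not> eventually (\<lambda>n. y > ereal (f n / real n)) sequentially"
    using Limsup_le_iff[of sequentially "\<lambda>n. ereal (f n / real n)" "ereal c"] by (auto simp: not_le)
  define S where "S = {n. c < f n / real n}"
  have "frequently (\<lambda>n. c < f n / real n) sequentially"
    using y unfolding frequently_def
    by (smt (verit, ccfv_SIG) ereal_less_le eventually_mono less_ereal.simps(1) not_less)
  then have Sinf: "infinite S" unfolding S_def
    by (simp add: frequently_cofinite cofinite_eq_sequentially[symmetric])
  have Smem: "n \<ge> 1 \<and> f n > c * real n" if "n \<in> S" for n
  proof -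
    have "n \<noteq> 0" proof assume "n = 0" then show False using that c(1) by (auto simp: S_def) qed
    then show ?thesis using that by (auto simp: S_def field_simps)
  qed
  obtain P :: "nat \<Rightarrow> bool" where P: "infinite {n\<in>S. P n}" "infinite {n. \<not> P n}"
  proof (cases "infinite {n\<in>S. even n}")
    case True
    have "infinite {n::nat. odd n}"
      by (metis (no_types) infinite_nat_iff_unbounded_le dvd_triv_left even_Suc mem_Collect_eq
          Suc_leD le_cases)
    then show ?thesis using True that[of even] by auto
  next
    case False
    have "S = {n\<in>S. even n} \<union> {n\<in>S. odd n}" by auto
    then have "infinite {n\<in>S. odd n}" using Sinf False by (metis finite_UnI)
    moreover have "infinite {n::nat. even n}"
      by (metis (no_types) infinite_nat_iff_unbounded_le dvd_triv_left even_Suc mem_Collect_eq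
          Suc_leD le_cases)
    ultimately show ?thesis using that[of odd] by auto
  qed
  define a where "a n = (if n \<in> S \<and> P n then c * real n else 0)" for n
  have a_nn: "a n \<ge> 0" for n using c(1) by (auto simp: a_def)
  have ineq: "\<forall>n m. n \<ge> 1 \<longrightarrow> m \<ge> 1 \<longrightarrow> a (n + m) \<le> a n + a m + f (n + m)"
  proof (intro allI impI)
    fix n m :: nat assume "n \<ge> 1" "m \<ge> 1"
    then have "f (n+m) \<ge> 0" using f_nonneg by simp
    moreover have "a (n+m) \<le> f (n+m)" using Smem[of "n+m"] \<open>f (n+m) \<ge> 0\<close>
      by (auto simp: a_def)
    ultimately show "a (n + m) \<le> a n + a m + f (n + m)" using a_nn[of n] a_nn[of m] by linarith
  qed
  have nolim: "\<not> (\<exists>L :: ereal. ((\<lambda>n. ereal (a n / real n)) \<longlongrightarrow> L) sequentially)"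
  proof
    assume "\<exists>L :: ereal. ((\<lambda>n. ereal (a n / real n)) \<longlongrightarrow> L) sequentially"
    then obtain L where L: "((\<lambda>n. ereal (a n / real n)) \<longlongrightarrow> L) sequentially" by blast
    have "{n\<in>S. P n} \<subseteq> {n. ereal (a n / real n) = ereal c}"
      using Smem by (auto simp: a_def)
    then have "infinite {n. ereal (a n / real n) = ereal c}" using P(1) finite_subset by blast
    then have "L = ereal c" using freq_tendsto_val[OF L] by blast
    moreover have "{n. \<not> P n} \<subseteq> {n. ereal (a n / real n) = ereal 0}"
      by (auto simp: a_def)
    then have "infinite {n. ereal (a n / real n) = ereal 0}" using P(2) finite_subset by blast
    then have "L = ereal 0" using freq_tendsto_val[OF L] by blast
    ultimately show False using c(1) by simp
  qed
  show ?thesis using ineq nolim by blast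
qed

end
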